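(* Let $\mathcal{D}\in\mathbb{C}^{\mathbf{N}(s)\times\mathbf{N}(s)}$ with $\mathrm{ind}(\mathcal{D})=k$ and let $\mathcal{B}\in\mathbb{C}^{\mathbf{N}(s)}$. Then the set of all solutions $\mathcal{Z}\in\mathbb{C}^{\mathbf{N}(s)}$ of the multilinear system $\mathcal{D}^k*_s\mathcal{Z}=\mathcal{D}^k*_s\mathcal{D}^\dagger*_s\mathcal{B}$ is exactly $\{\mathcal{D}^{c,\dagger}*_s\mathcal{B}+(\mathcal{I}-\mathcal{D}^{c,\dagger}*_s\mathcal{D})*_s\mathcal{Q}:\ \mathcal{Q}\in\mathbb{C}^{\mathbf{N}(s)}\}$.
   Context: For positive integers $N_1,\dots,N_s$ write $\mathbf{N}(s)=N_1\times\cdots\times N_s$. For $\mathcal{A}\in\mathbb{C}^{\mathbf{I}(m)\times\mathbf{K}(p)}$ and $\mathcal{B}\in\mathbb{C}^{\mathbf{K}(p)\times\mathbf{J}(n)}$ the Einstein product is the tensor $\mathcal{A}*_p\mathcal{B}\in\mathbb{C}^{\mathbf{I}(m)\times\mathbf{J}(n)}$ with entries $(\mathcal{A}*_p\mathcal{B})_{i_1\dots i_m j_1\dots j_n}=\sum_{k_1,\dots,k_p}\mathcal{A}_{i_1\dots i_m k_1\dots k_p}\mathcal{B}_{k_1\dots k_p j_1\dots j_n}$; the case $n=0$ (so $\mathcal{B}\in\mathbb{C}^{\mathbf{K}(p)}$) is allowed. For $\mathcal{D}\in\mathbb{C}^{\mathbf{N}(s)\times\mathbf{N}(s)}$, powers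 are $\mathcal{D}^0=\mathcal{I}$, $\mathcal{D}^{j+1}=\mathcal{D}*_s\mathcal{D}^j$, where $\mathcal{I}$ is the identity tensor with entries $\mathcal{I}_{i_1\dots i_s j_1\dots j_s}=\prod_{t=1}^s\delta_{i_tj_t}$. The conjugate transpose $\mathcal{A}^*$ of $\mathcal{A}\in\mathbb{C}^{\mathbf{M}(m)\times\mathbf{N}(n)}$ has entries $(\mathcal{A}^* )_{j_1\dots j_n i_1\dots i_m}=\overline{\mathcal{A}_{i_1\dots i_m j_1\dots j_n}}$. For $\mathcal{A}\in\mathbb{C}^{\mathbf{M}(m)\times\mathbf{N}(n)}$, $\mathscr{R}(\mathcal{A})=\{\mathcal{A}*_n\mathcal{E}:\mathcal{E}\in\mathbb{C}^{\mathbf{N}(n)}\}$. The index $\mathrm{ind}(\mathcal{D})$ of $\mathcal{D}\in\mathbb{C}^{\mathbf{N}(s)\times\mathbf{N}(s)}$ is the smallest nonnegative integer $k$ with $\dim\mathscr{R}(\mathcal{D}^k)=\dim\mathscr{R}(\mathcal{D}^{k+1})$. The Moore–Penrose inverse $\mathcal{D}^\dagger$ of $\mathcal{D}\in\mathbb{C}^{\mathbf{N}(s)\times\mathbf{N}(s)}$ is the unique $\mathcal{Y}$ with $\mathcal{D}*_s\mathcal{Y}*_s\mathcal{D}=\mathcal{D}$, $\mathcal{Y}*_s\mathcal{D}*_s\mathcal{Y}=\mathcal{Y}$, $(\mathcal{D}*_s\mathcal{Y})^*=\mathcal{D}*_s\mathcal{Y}$, $(\mathcal{Y}*_s\mathcal{D})^*=\mathcal{Y}*_s\mathcal{D}$.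 With $k=\mathrm{ind}(\mathcal{D})$, the Drazin inverse $\mathcal{D}^{\mathrm D}$ is the unique $\mathcal{Y}$ with $\mathcal{Y}*_s\mathcal{D}^{k+1}=\mathcal{D}^k$, $\mathcal{Y}*_s\mathcal{D}*_s\mathcal{Y}=\mathcal{Y}$, $\mathcal{D}*_s\mathcal{Y}=\mathcal{Y}*_s\mathcal{D}$. The CMP inverse is $\mathcal{D}^{c,\dagger}=\mathcal{D}^\dagger*_s\mathcal{D}*_s\mathcal{D}^{\mathrm D}*_s\mathcal{D}*_s\mathcal{D}^\dagger$. *)

theory Defs
  imports "HOL-Analysis.Analysis" "HOL-Library.Function_Algebras"
begin

text \<open>Tensors of shape N(s) (N given as a list of dimensions [N_1,...,N_s]).
  Multi-indices are lists of naturals (0-based).  A tensor in C^{N(s) x N(s)}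
  is a function of two multi-indices, a tensor in C^{N(s)} a function of one
  multi-index; well-formed tensors vanish outside the index domain.\<close>

type_synonym tens2 = "nat list \<Rightarrow> nat list \<Rightarrow> complex"
type_synonym tens1 = "nat list \<Rightarrow> complex"

definition idx :: "nat list \<Rightarrow> nat list set" where
  "idx N = {is. length is = length N \<and> (\<forall>t<length N. is ! t < N ! t)}"

definition tensor2 :: "nat list \<Rightarrow> tens2 \<Rightarrow> bool" where
  "tensor2 N A \<longleftrightarrow> (\<forall>i j. (i \<notin> idx N \<or> j \<notin> idx N) \<longrightarrow> A i j = 0)"

definition tensor1 :: "nat list \<Rightarrow> tens1 \<Rightarrow> bool" where
  "tensor1 N E \<longleftrightarrow> (\<forall>i. i \<notin> idx N \<longrightarrow> E i = 0)"

definition ein :: "nat list \<Rightarrow> tens2 \<Rightarrow> tens2 \<Rightarrow> tens2" where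
  "ein N A B = (\<lambda>i j. if i \<in> idx N \<and> j \<in> idx N
      then \<Sum>k\<in>idx N. A i k * B k j else 0)"

definition einv :: "nat list \<Rightarrow> tens2 \<Rightarrow> tens1 \<Rightarrow> tens1" where
  "einv N A E = (\<lambda>i. if i \<in> idx N then \<Sum>k\<in>idx N. A i k * E k else 0)"

definition tid :: "nat list \<Rightarrow> tens2" where
  "tid N = (\<lambda>i j. if i \<in> idx N \<and> j \<in> idx N \<and> i = j then 1 else 0)"

definition tpow :: "nat list \<Rightarrow> tens2 \<Rightarrow> nat \<Rightarrow> tens2" where
  "tpow N D j = ((\<lambda>X. ein N D X) ^^ j) (tid N)"

definition tstar :: "tens2 \<Rightarrow> tens2" where
  "tstar A = (\<lambda>j i. cnj (A i j))"

definition tminus :: "tens2 \<Rightarrow> tens2 \<Rightarrow> tens2" where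
  "tminus A B = (\<lambda>i j. A i j - B i j)"

definition tadd1 :: "tens1 \<Rightarrow> tens1 \<Rightarrow> tens1" where
  "tadd1 E F = (\<lambda>i. E i + F i)"

definition trange :: "nat list \<Rightarrow> tens2 \<Rightarrow> tens1 set" where
  "trange N A = {einv N A E | E. tensor1 N E}"

definition cdim :: "tens1 set \<Rightarrow> nat" where
  "cdim S = vector_space.dim (\<lambda>(c::complex) (f::tens1). (\<lambda>x. c * f x)) S"

definition tind :: "nat list \<Rightarrow> tens2 \<Rightarrow> nat" where
  "tind N D = (LEAST k. cdim (trange N (tpow N D k)) = cdim (trange N (tpow N D (Suc k))))"

definition mpinv :: "nat list \<Rightarrow> tens2 \<Rightarrow> tens2" where
  "mpinv N D = (THE Y. tensor2 N Y \<and>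
      ein N (ein N D Y) D = D \<and> ein N (ein N Y D) Y = Y \<and>
      tstar (ein N D Y) = ein N D Y \<and> tstar (ein N Y D) = ein N Y D)"

definition drazin :: "nat list \<Rightarrow> tens2 \<Rightarrow> tens2" where
  "drazin N D = (let k = tind N D in THE Y. tensor2 N Y \<and>
      ein N Y (tpow N D (Suc k)) = tpow N D k \<and> ein N (ein N Y D) Y = Y \<and>
      ein N D Y = ein N Y D)"

definition cmp :: "nat list \<Rightarrow> tens2 \<Rightarrow> tens2" where
  "cmp N D = ein N (ein N (ein N (ein N (mpinv N D) D) (drazin N D)) D) (mpinv N D)"

end

theory Submission
  imports Defs
begin


lemma finite_idx: "finite (idx N)"
proof -
  have "idx N \<subseteq> {xs. set xs \<subseteq> {..<Max (set N)} \<and> length xs = length N}"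
  proof
    fix xs assume "xs \<in> idx N"
    then have l: "length xs = length N" and b: "\<forall>t<length N. xs ! t < N ! t" by (auto simp: idx_def)
    have "set xs \<subseteq> {..<Max (set N)}"
    proof
      fix x assume "x \<in> set xs"
      then obtain t where t: "t < length xs" "xs ! t = x" by (auto simp: in_set_conv_nth)
      then have "N ! t \<in> set N" using l by auto
      then have "N ! t \<le> Max (set N)" by simp
      moreover have "x < N ! t" using b t l by auto
      ultimately show "x \<in> {..<Max (set N)}" by simp
    qed
    then show "xs \<in> {xs. set xs \<subseteq> {..<Max (set N)} \<and> length xs = length N}" using l by auto
  qed
  then show ?thesis by (rule finite_subset) (rule finite_lists_length_eq, simp)
qed

lemma sum_fun_app: "(\<Sum>x\<in>A. f x) i = (\<Sum>x\<in>A. f x i)"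
  by (induction A rule: infinite_finite_induct) auto

lemma ein_assoc: "ein N (ein N A B) C = ein N A (ein N B C)"
proof (intro ext)
  fix i j
  show "ein N (ein N A B) C i j = ein N A (ein N B C) i j"
    unfolding ein_def
    using sum.swap[of "\<lambda>x xa. A i xa * (B xa x * C x j)" "idx N" "idx N"]
    by (simp add: sum_distrib_left sum_distrib_right mult.assoc cong: sum.cong)
qed

lemma einv_ein: "einv N (ein N A B) E = einv N A (einv N B E)"
proof (intro ext)
  fix i
  show "einv N (ein N A B) E i = einv N A (einv N B E) i"
    unfolding ein_def einv_def
    using sum.swap[of "\<lambda>x xa. A i xa * (B xa x * E x)" "idx N" "idx N"]
    by (simp add: sum_distrib_left sum_distrib_right mult.assoc cong: sum.cong)
qed

lemma tensor2_ein[simp]: "tensor2 N (ein N A B)"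
  by (auto simp: tensor2_def ein_def)
lemma tensor1_einv[simp]: "tensor1 N (einv N A B)"
  by (auto simp: tensor1_def einv_def)
lemma tensor2_tid[simp]: "tensor2 N (tid N)"
  by (auto simp: tensor2_def tid_def)

lemma sdelta1: "finite S \<Longrightarrow> a \<in> S \<Longrightarrow> (\<Sum>k\<in>S. (if a = k then 1 else 0) * (f k::complex)) = f a"
  by (subst sum.cong[OF refl, of _ _ "\<lambda>k. if a = k then f k else 0"]) auto
lemma sdelta2: "finite S \<Longrightarrow> a \<in> S \<Longrightarrow> (\<Sum>k\<in>S. (f k::complex) * (if k = a then 1 else 0)) = f a"
  by (subst sum.cong[OF refl, of _ _ "\<lambda>k. if a = k then f k else 0"]) auto
lemma ein_tid_left: "tensor2 N A \<Longrightarrow> ein N (tid N) A = A"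
  unfolding ein_def tid_def tensor2_def using finite_idx
  by (auto simp: fun_eq_iff sdelta1)
lemma ein_tid_right: "tensor2 N A \<Longrightarrow> ein N A (tid N) = A"
  unfolding ein_def tid_def tensor2_def using finite_idx
  by (auto simp: fun_eq_iff sdelta2)
lemma einv_tid: "tensor1 N E \<Longrightarrow> einv N (tid N) E = E"
  unfolding einv_def tid_def tensor1_def using finite_idx
  by (auto simp: fun_eq_iff sdelta1)

lemma ein_zero_right[simp]: "ein N A 0 = 0" by (auto simp: fun_eq_iff ein_def)
lemma ein_zero_left[simp]: "ein N 0 A = 0" by (auto simp: fun_eq_iff ein_def)
lemma einv_zero[simp]: "einv N A 0 = 0" by (auto simp: fun_eq_iff einv_def)

lemma tstar_ein: "tstar (ein N A B) = ein N (tstar B) (tstar A)"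
  by (auto simp: fun_eq_iff ein_def tstar_def mult.commute)
lemma tstar_tstar[simp]: "tstar (tstar A) = A" by (simp add: tstar_def)
lemma tensor2_tstar: "tensor2 N A \<Longrightarrow> tensor2 N (tstar A)"
  by (auto simp: tensor2_def tstar_def)
lemma tstar_tid[simp]: "tstar (tid N) = tid N" by (auto simp: fun_eq_iff tstar_def tid_def)

lemma ein_tminus_left: "ein N (tminus A B) C = tminus (ein N A C) (ein N B C)"
  by (auto simp: fun_eq_iff ein_def tminus_def algebra_simps sum_subtractf)
lemma ein_tminus_right: "ein N C (tminus A B) = tminus (ein N C A) (ein N C B)"
  by (auto simp: fun_eq_iff ein_def tminus_def algebra_simps sum_subtractf)
lemma einv_tminus: "einv N (tminus A B) E = (\<lambda>i. einv N A E i - einv N B E i)"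
  by (auto simp: fun_eq_iff einv_def tminus_def algebra_simps sum_subtractf)
lemma einv_tadd1: "einv N A (tadd1 E F) = tadd1 (einv N A E) (einv N A F)"
  by (auto simp: fun_eq_iff einv_def tadd1_def algebra_simps sum.distrib)
lemma tensor2_tminus[simp]: "tensor2 N A \<Longrightarrow> tensor2 N B \<Longrightarrow> tensor2 N (tminus A B)"
  by (auto simp: tensor2_def tminus_def)
lemma tminus_self[simp]: "tminus A A = 0" by (simp add: fun_eq_iff tminus_def)

lemma tpow_0[simp]: "tpow N D 0 = tid N" by (simp add: tpow_def)
lemma tpow_Suc: "tpow N D (Suc j) = ein N D (tpow N D j)" by (simp add: tpow_def)
lemma tensor2_tpow[simp]: "tensor2 N (tpow N D j)"
  by (cases j) (auto simp: tpow_Suc)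
lemma tpow_add: "tpow N D (a + b) = ein N (tpow N D a) (tpow N D b)"
  by (induction a) (auto simp: tpow_Suc ein_tid_left ein_assoc)
lemma tpow_1: "tensor2 N D \<Longrightarrow> tpow N D 1 = D"
  by (simp add: tpow_Suc ein_tid_right)
lemma tpow_Suc': "tensor2 N D \<Longrightarrow> tpow N D (Suc j) = ein N (tpow N D j) D"
proof (induction j)
  case 0 then show ?case by (simp add: tpow_Suc ein_tid_left ein_tid_right)
next
  case (Suc j)
  have "tpow N D (Suc (Suc j)) = ein N D (ein N (tpow N D j) D)" using Suc by (simp add: tpow_Suc)
  also have "\<dots> = ein N (ein N D (tpow N D j)) D" by (simp add: ein_assoc)
  finally show ?case by (simp add: tpow_Suc)
qed

lemma comm_tpow:
  assumes "tensor2 N A" "tensor2 N B" "ein N A B = ein N B A"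
  shows "ein N (tpow N A j) B = ein N B (tpow N A j)"
proof (induction j)
  case 0 then show ?case using assms by (simp add: ein_tid_left ein_tid_right)
next
  case (Suc j)
  have "ein N (tpow N A (Suc j)) B = ein N A (ein N (tpow N A j) B)" by (simp add: tpow_Suc ein_assoc)
  also have "\<dots> = ein N (ein N A B) (tpow N A j)" by (simp add: Suc ein_assoc)
  also have "\<dots> = ein N B (tpow N A (Suc j))" by (simp add: assms(3) ein_assoc tpow_Suc)
  finally show ?case .
qed

lemma comm_tpow2:
  assumes "tensor2 N A" "tensor2 N B" "ein N A B = ein N B A"
  shows "ein N (tpow N A i) (tpow N B j) = ein N (tpow N B j) (tpow N A i)"
  using comm_tpow[OF assms(2) tensor2_tpow[of N A i] comm_tpow[OF assms, symmetric]]
  by auto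



lemma starself_zero:
  assumes M: "tensor2 N M" and z: "ein N (tstar M) M = 0"
  shows "M = 0"
proof (intro ext)
  fix a b
  show "M a b = 0 a b"
  proof (cases "a \<in> idx N \<and> b \<in> idx N")
    case False then show ?thesis using M by (auto simp: tensor2_def)
  next
    case True
    have "ein N (tstar M) M b b = 0" using z by simp
    then have "(\<Sum>k\<in>idx N. cnj (M k b) * M k b) = 0" using True by (simp add: ein_def tstar_def)
    moreover have "\<And>k. cnj (M k b) * M k b = complex_of_real ((cmod (M k b))^2)"
      by (subst complex_norm_square) (rule mult.commute)
    ultimately have "complex_of_real (\<Sum>k\<in>idx N. (cmod (M k b))^2) = 0" by simp
    then have "(\<Sum>k\<in>idx N. (cmod (M k b))^2) = 0" by (simp only: of_real_eq_0_iff)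
    then have "\<forall>k\<in>idx N. (cmod (M k b))^2 = 0"
      using sum_nonneg_eq_0_iff[OF finite_idx, where f="\<lambda>k. (cmod (M k b))^2"] by simp
    then show ?thesis using True by simp
  qed
qed

lemma cancel_star:
  assumes A: "tensor2 N A" and W: "tensor2 N W" and z: "ein N (ein N (tstar A) A) W = 0"
  shows "ein N A W = 0"
proof (rule starself_zero)
  show "tensor2 N (ein N A W)" by simp
  have "ein N (tstar (ein N A W)) (ein N A W) = ein N (tstar W) (ein N (ein N (tstar A) A) W)"
    by (simp add: tstar_ein ein_assoc)
  then show "ein N (tstar (ein N A W)) (ein N A W) = 0" using z by simp
qed

lemma cancel_herm:
  assumes B: "tensor2 N B" and h: "tstar B = B" and X: "tensor2 N X"
  shows "ein N (tpow N B (Suc j)) X = 0 \<Longrightarrow> ein N B X = 0"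
proof (induction j)
  case 0 then show ?case using B by (simp add: tpow_Suc ein_tid_right)
next
  case (Suc j)
  have "ein N (ein N (tstar B) B) (ein N (tpow N B j) X) = ein N (tpow N B (Suc (Suc j))) X"
    using h by (simp add: tpow_Suc ein_assoc)
  then have e: "ein N (ein N (tstar B) B) (ein N (tpow N B j) X) = 0"
    using Suc.prems by (simp add: fun_eq_iff)
  have "ein N B (ein N (tpow N B j) X) = 0"
    by (rule cancel_star[OF B tensor2_ein e])
  then show ?case using Suc.IH by (simp add: tpow_Suc ein_assoc)
qed



lemma ein_sum_right:
  "ein N X (\<lambda>a b. \<Sum>i\<in>I. f i * Y i a b) = (\<lambda>a b. \<Sum>i\<in>I. f i * ein N X (Y i) a b)"
proof (intro ext)
  fix a b
  show "ein N X (\<lambda>a b. \<Sum>i\<in>I. f i * Y i a b) a b = (\<Sum>i\<in>I. f i * ein N X (Y i) a b)"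
    unfolding ein_def
    using sum.swap[of "\<lambda>k i. X a k * (f i * Y i k b)" I "idx N"]
    by (auto simp: sum_distrib_left mult.left_commute)
qed

lemma ein_sum_left:
  "ein N (\<lambda>a b. \<Sum>i\<in>I. f i * Y i a b) X = (\<lambda>a b. \<Sum>i\<in>I. f i * ein N (Y i) X a b)"
proof (intro ext)
  fix a b
  show "ein N (\<lambda>a b. \<Sum>i\<in>I. f i * Y i a b) X a b = (\<Sum>i\<in>I. f i * ein N (Y i) X a b)"
    unfolding ein_def
    using sum.swap[of "\<lambda>k i. f i * Y i a k * X k b" I "idx N"]
    by (auto simp: sum_distrib_left sum_distrib_right mult.assoc)
qed

lemma tpow_comm_self: "tensor2 N A \<Longrightarrow> ein N A (tpow N A j) = ein N (tpow N A j) A"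
  by (simp add: tpow_Suc[symmetric] tpow_Suc'[symmetric])

lemma span_all:
  fixes X :: tens2
  assumes X: "tensor2 N X"
  shows "X \<in> module.span (\<lambda>c (X::tens2). \<lambda>i j. c * X i j)
     ((\<lambda>p. \<lambda>i j. if i = fst p \<and> j = snd p then 1 else 0) ` (idx N \<times> idx N))"
proof -
  interpret V2: vector_space "\<lambda>c (X::tens2). \<lambda>i j. c * X i j"
    by unfold_locales (auto simp: fun_eq_iff algebra_simps)
  let ?E = "\<lambda>p::nat list \<times> nat list. \<lambda>i j. if i = fst p \<and> j = snd p then (1::complex) else 0"
  let ?T = "?E ` (idx N \<times> idx N)"
  have eq: "X = (\<Sum>p\<in>idx N \<times> idx N. (\<lambda>i j. X (fst p) (snd p) * ?E p i j))"
  proof (intro ext)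
    fix i j
    have "(\<Sum>p\<in>idx N \<times> idx N. (\<lambda>i j. X (fst p) (snd p) * ?E p i j)) i j
        = (\<Sum>p\<in>idx N \<times> idx N. if (i, j) = p then X (fst p) (snd p) else 0)"
      by (simp add: sum_fun_app) (rule sum.cong, auto)
    also have "\<dots> = X i j"
      using X finite_idx[of N] by (auto simp: tensor2_def)
    finally show "X i j = (\<Sum>p\<in>idx N \<times> idx N. (\<lambda>i j. X (fst p) (snd p) * ?E p i j)) i j" by simp
  qed
  have "(\<lambda>i j. X (fst p) (snd p) * ?E p i j) \<in> V2.span ?T" if "p \<in> idx N \<times> idx N" for p
  proof -
    have "?E p \<in> V2.span ?T" using that by (intro V2.span_base) auto
    then show ?thesis using V2.span_scale by blast
  qed
  then show ?thesis
    by (subst eq, intro V2.span_sum) auto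
qed

lemma pow_rel:
  assumes A: "tensor2 N A"
  shows "\<exists>r P. tensor2 N P \<and> ein N A P = ein N P A \<and> tpow N A r = ein N (tpow N A (Suc r)) P"
proof (cases "inj_on (tpow N A) {0..card (idx N \<times> idx N)}")
  case False
  then obtain a b where ab: "a \<noteq> b" "tpow N A a = tpow N A b" by (auto simp: inj_on_def)
  have "\<exists>a b. a < b \<and> tpow N A a = tpow N A b"
  proof (cases "a < b")
    case True then show ?thesis using ab by blast
  next
    case False then have "b < a" using ab by simp
    then show ?thesis using ab by metis
  qed
  then obtain a b where ab: "a < b" "tpow N A a = tpow N A b" by blast
  have "tpow N A b = ein N (tpow N A (Suc a)) (tpow N A (b - Suc a))"
    using ab by (simp add: tpow_add[symmetric])
  then show ?thesis
    using ab A by (intro exI[of _ a] exI[of _ "tpow N A (b - Suc a)"]) (simp add: tpow_comm_self)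
next
  case True
  interpret V2: vector_space "\<lambda>c (X::tens2). \<lambda>i j. c * X i j"
    by unfold_locales (auto simp: fun_eq_iff algebra_simps)
  define m where "m = card (idx N \<times> idx N)"
  let ?E = "\<lambda>p::nat list \<times> nat list. \<lambda>i j. if i = fst p \<and> j = snd p then (1::complex) else 0"
  let ?T = "?E ` (idx N \<times> idx N)"
  let ?Pw = "tpow N A ` {0..m}"
  have fT: "finite ?T" using finite_idx by auto
  have cT: "card ?T \<le> m" unfolding m_def by (rule card_image_le) (simp add: finite_idx)
  have sp: "?Pw \<subseteq> V2.span ?T" using span_all by auto
  have cP: "card ?Pw = Suc m" using True by (simp add: m_def card_image)
  have "V2.dependent ?Pw"
  proof (rule ccontr)
    assume "\<not> V2.dependent ?Pw"
    then have "card ?Pw \<le> card ?T" using V2.independent_span_bound[OF fT _ sp] by auto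
    then show False using cT cP by simp
  qed
  then obtain u where u: "\<exists>v\<in>?Pw. u v \<noteq> 0" "(\<Sum>v\<in>?Pw. (\<lambda>i j. u v * v i j)) = 0"
    using V2.dependent_finite[of ?Pw] by auto
  define c where "c i = u (tpow N A i)" for i
  have inj: "inj_on (tpow N A) {0..m}" using True by (simp add: m_def)
  have rel: "(\<Sum>i\<in>{0..m}. c i * tpow N A i a b) = 0" for a b
  proof -
    have "(\<Sum>v\<in>?Pw. (\<lambda>i j. u v * v i j)) a b = 0" using u(2) by simp
    then show ?thesis by (simp add: sum_fun_app sum.reindex[OF inj] c_def)
  qed
  have ex: "\<exists>i. i \<le> m \<and> c i \<noteq> 0" using u(1) by (auto simp: c_def)
  define r where "r = (LEAST i. i \<le> m \<and> c i \<noteq> 0)"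
  have r: "r \<le> m" "c r \<noteq> 0" using LeastI_ex[OF ex] by (auto simp: r_def)
  have below: "i < r \<Longrightarrow> c i = 0" for i
    using not_less_Least[of i "\<lambda>i. i \<le> m \<and> c i \<noteq> 0"] r(1) by (auto simp: r_def)
  define P where "P = (\<lambda>a b. \<Sum>i\<in>{Suc r..m}. (- (c i / c r)) * tpow N A (i - Suc r) a b)"
  have key: "tpow N A r a b = (\<Sum>i\<in>{Suc r..m}. (- (c i / c r)) * tpow N A i a b)" for a b
  proof -
    have "{0..m} = {0..<r} \<union> ({r} \<union> {Suc r..m})" using r(1) by auto
    then have "(\<Sum>i\<in>{0..m}. c i * tpow N A i a b)
       = (\<Sum>i\<in>{0..<r}. c i * tpow N A i a b) + (c r * tpow N A r a b
          + (\<Sum>i\<in>{Suc r..m}. c i * tpow N A i a b))"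
      apply simp
      apply (subst sum.union_disjoint)
         apply auto
      done
    also have "(\<Sum>i\<in>{0..<r}. c i * tpow N A i a b) = 0" using below by simp
    finally have "c r * tpow N A r a b = - (\<Sum>i\<in>{Suc r..m}. c i * tpow N A i a b)"
      using rel[of a b] by (simp add: add_eq_0_iff)
    then have "tpow N A r a b = - (\<Sum>i\<in>{Suc r..m}. c i * tpow N A i a b) / c r"
      using r(2) by (simp add: field_simps)
    also have "\<dots> = (\<Sum>i\<in>{Suc r..m}. (- (c i / c r)) * tpow N A i a b)"
      by (simp add: sum_divide_distrib sum_negf[symmetric])
    finally show ?thesis .
  qed
  have "ein N (tpow N A (Suc r)) P = (\<lambda>a b. \<Sum>i\<in>{Suc r..m}. (- (c i / c r)) * tpow N A i a b)"
    unfolding P_def ein_sum_right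
    by (intro ext sum.cong refl) (simp add: tpow_add[symmetric])
  then have e1: "tpow N A r = ein N (tpow N A (Suc r)) P" using key by (simp add: fun_eq_iff)
  have e2: "ein N A P = ein N P A"
    unfolding P_def ein_sum_right ein_sum_left using A by (simp add: tpow_comm_self)
  have e3: "tensor2 N P" unfolding P_def tensor2_def
    using tensor2_tpow[of N A] by (auto simp: tensor2_def)
  show ?thesis using e1 e2 e3 by blast
qed



definition isMP :: "nat list \<Rightarrow> tens2 \<Rightarrow> tens2 \<Rightarrow> bool" where
  "isMP N D Y \<longleftrightarrow> tensor2 N Y \<and>
      ein N (ein N D Y) D = D \<and> ein N (ein N Y D) Y = Y \<and>
      tstar (ein N D Y) = ein N D Y \<and> tstar (ein N Y D) = ein N Y D"

lemma mp_unique: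
  assumes Y: "isMP N A Y" and Z: "isMP N A Z"
  shows "Y = Z"
proof -
  have y1: "ein N A (ein N Y A) = A" and y2: "ein N Y (ein N A Y) = Y"
   and y3: "tstar (ein N A Y) = ein N A Y" and y4: "tstar (ein N Y A) = ein N Y A"
    using Y by (auto simp: isMP_def ein_assoc)
  have z1: "ein N A (ein N Z A) = A" and z2: "ein N Z (ein N A Z) = Z"
   and z3: "tstar (ein N A Z) = ein N A Z" and z4: "tstar (ein N Z A) = ein N Z A"
    using Z by (auto simp: isMP_def ein_assoc)
  have sA1: "tstar A = ein N (tstar A) (ein N A Z)"
  proof -
    have "tstar A = tstar (ein N (ein N A Z) A)" using z1 by (simp add: ein_assoc)
    also have "\<dots> = ein N (tstar A) (ein N A Z)" using z3 by (simp add: tstar_ein)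
    finally show ?thesis .
  qed
  have sA2: "tstar A = ein N (ein N Y A) (tstar A)"
  proof -
    have "tstar A = tstar (ein N A (ein N Y A))" using y1 by simp
    also have "\<dots> = ein N (ein N Y A) (tstar A)" using y4 by (simp add: tstar_ein)
    finally show ?thesis .
  qed
  have "Y = ein N Y (tstar (ein N A Y))" using y2 y3 by simp
  also have "\<dots> = ein N Y (ein N (tstar Y) (tstar A))" by (simp add: tstar_ein)
  also have "\<dots> = ein N Y (ein N (tstar Y) (ein N (tstar A) (ein N A Z)))" using sA1 by simp
  also have "\<dots> = ein N (ein N Y (tstar (ein N A Y))) (ein N A Z)" by (simp add: tstar_ein ein_assoc)
  also have "\<dots> = ein N Y (ein N A Z)" using y2 y3 by simp
  finally have e1: "Y = ein N Y (ein N A Z)" .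
  have "Z = ein N (tstar (ein N Z A)) Z" using z2 z4 by (simp add: ein_assoc)
  also have "\<dots> = ein N (tstar A) (ein N (tstar Z) Z)" by (simp add: tstar_ein ein_assoc)
  also have "\<dots> = ein N (ein N Y A) (ein N (tstar A) (ein N (tstar Z) Z))" using sA2 by (simp add: ein_assoc[symmetric])
  also have "\<dots> = ein N Y (ein N A (ein N (tstar (ein N Z A)) Z))" by (simp add: tstar_ein ein_assoc)
  also have "\<dots> = ein N Y (ein N A Z)" using z2 z4 by (simp add: ein_assoc)
  finally have e2: "Z = ein N Y (ein N A Z)" .
  show ?thesis using e1 e2 by simp
qed

lemma comm_tail: "ein N X Y = ein N Y X \<Longrightarrow> ein N X (ein N Y Z) = ein N Y (ein N X Z)"
  by (metis ein_assoc)

lemma mp_exists: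
  assumes A: "tensor2 N A"
  shows "\<exists>X. isMP N A X"
proof -
  define B where "B = ein N (tstar A) A"
  have tB: "tensor2 N B" by (simp add: B_def)
  have hB: "tstar B = B" by (simp add: B_def tstar_ein)
  obtain r P where tP: "tensor2 N P" and cP: "ein N B P = ein N P B"
    and rP: "tpow N B r = ein N (tpow N B (Suc r)) P"
    using pow_rel[OF tB] by blast
  have "tpow N B (Suc r) = ein N B (ein N (tpow N B (Suc r)) P)"
    using rP by (simp add: tpow_Suc)
  also have "\<dots> = ein N (tpow N B (Suc r)) (ein N B P)"
    using tpow_comm_self[OF tB, of "Suc r"] by (simp add: ein_assoc[symmetric])
  finally have "ein N (tpow N B (Suc r)) (tminus (tid N) (ein N B P)) = 0"
    by (simp add: ein_tminus_right ein_tid_right)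
  then have "ein N B (tminus (tid N) (ein N B P)) = 0"
    by (rule cancel_herm[OF tB hB, rotated]) simp
  then have "tminus B (ein N B (ein N B P)) = 0"
    by (simp only: ein_tminus_right ein_tid_right[OF tB])
  then have BBP: "ein N B (ein N B P) = B"
    by (simp add: fun_eq_iff tminus_def)
  have BPB: "ein N B (ein N P B) = B" using BBP cP by simp
  have cPs: "ein N B (tstar P) = ein N (tstar P) B"
    using arg_cong[OF cP, of tstar] hB by (simp add: tstar_ein)
  have BPsB: "ein N B (ein N (tstar P) B) = B"
    using arg_cong[OF BPB, of tstar] hB by (simp add: tstar_ein ein_assoc)
  define Q where "Q = ein N P (ein N B (tstar P))"
  have hQ: "tstar Q = Q" unfolding Q_def using hB by (simp add: tstar_ein ein_assoc)
  have cQ: "ein N B Q = ein N Q B"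
  proof -
    have "ein N B Q = ein N P (ein N B (ein N B (tstar P)))"
      unfolding Q_def using cP by (simp add: ein_assoc[symmetric])
    also have "\<dots> = ein N P (ein N B (ein N (tstar P) B))" using cPs by simp
    also have "\<dots> = ein N Q B"
      unfolding Q_def by (simp add: ein_assoc)
    finally show ?thesis .
  qed
  have BQB: "ein N B (ein N Q B) = B"
  proof -
    have "ein N B (ein N Q B) = ein N (ein N B (ein N P B)) (ein N (tstar P) B)"
      unfolding Q_def by (simp add: ein_assoc)
    then show ?thesis using BPB BPsB by simp
  qed
  define R where "R = ein N Q (ein N B Q)"
  have tR: "tensor2 N R" by (simp add: R_def)
  have hR: "tstar R = R" unfolding R_def using hB hQ by (simp add: tstar_ein ein_assoc)
  have cR: "ein N B R = ein N R B"
  proof -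
    have "ein N B R = ein N Q (ein N B (ein N B Q))"
      unfolding R_def using comm_tail[OF cQ] by simp
    also have "\<dots> = ein N Q (ein N B (ein N Q B))" using cQ by simp
    also have "\<dots> = ein N R B"
      unfolding R_def by (simp add: ein_assoc)
    finally show ?thesis .
  qed
  have BRB: "ein N B (ein N R B) = B"
  proof -
    have "ein N B (ein N R B) = ein N (ein N B (ein N Q B)) (ein N Q B)"
      unfolding R_def by (simp add: ein_assoc)
    then show ?thesis using BQB by simp
  qed
  have RBR: "ein N R (ein N B R) = R"
  proof -
    have "ein N R (ein N B R) = ein N Q (ein N (ein N B (ein N Q B)) (ein N Q (ein N B Q)))"
      unfolding R_def by (simp add: ein_assoc)
    also have "\<dots> = ein N Q (ein N (ein N B (ein N Q B)) Q)" using BQB by (simp add: ein_assoc[symmetric])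
    also have "\<dots> = R" using BQB by (simp add: R_def)
    finally show ?thesis .
  qed
  define X where "X = ein N R (tstar A)"
  have "ein N (ein N (tstar A) A) (tminus (ein N R B) (tid N)) = 0"
    using BRB tB by (simp add: B_def[symmetric] ein_tminus_right ein_tid_right)
  then have "ein N A (tminus (ein N R B) (tid N)) = 0"
    by (rule cancel_star[OF A, rotated]) simp
  then have "tminus (ein N A (ein N R B)) A = 0"
    by (simp only: ein_tminus_right ein_tid_right[OF A])
  then have ARB: "ein N A (ein N R B) = A"
    by (simp add: fun_eq_iff tminus_def)
  have p1: "ein N (ein N A X) A = A" using ARB by (simp add: X_def B_def ein_assoc)
  have p2: "ein N (ein N X A) X = X"
  proof -
    have "ein N (ein N X A) X = ein N (ein N R (ein N B R)) (tstar A)"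
      by (simp add: X_def B_def ein_assoc)
    then show ?thesis using RBR by (simp add: X_def)
  qed
  have p3: "tstar (ein N A X) = ein N A X" using hR by (simp add: X_def tstar_ein ein_assoc)
  have p4: "tstar (ein N X A) = ein N X A"
  proof -
    have "ein N X A = ein N R B" by (simp add: X_def B_def ein_assoc)
    moreover have "tstar (ein N R B) = ein N R B" using hR hB cR by (simp add: tstar_ein)
    ultimately show ?thesis by simp
  qed
  have "isMP N A X" using p1 p2 p3 p4 by (simp add: isMP_def X_def)
  then show ?thesis by blast
qed

lemma mpinv_props:
  assumes A: "tensor2 N A"
  shows "isMP N A (mpinv N A)"
proof -
  have "\<exists>!Y. isMP N A Y" using mp_exists[OF A] mp_unique by blast
  then show ?thesis unfolding mpinv_def isMP_def[symmetric] by (rule theI')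
qed



lemma trange_sub: "trange N A \<subseteq> {E. tensor1 N E}"
  by (auto simp: trange_def)

lemma V1_vs: "vector_space (\<lambda>c (f::tens1). \<lambda>x. c * f x)"
  by unfold_locales (auto simp: fun_eq_iff algebra_simps)

lemma trange_subspace: "module.subspace (\<lambda>c (f::tens1). \<lambda>x. c * f x) (trange N A)"
proof -
  interpret V1: vector_space "\<lambda>c (f::tens1). \<lambda>x. c * f x" by (rule V1_vs)
  show ?thesis unfolding V1.subspace_def
  proof (intro conjI ballI allI)
    show "0 \<in> trange N A" unfolding trange_def
      by (rule CollectI, rule exI[of _ 0]) (auto simp: tensor1_def fun_eq_iff einv_def)
  next
    fix x y assume "x \<in> trange N A" "y \<in> trange N A"
    then obtain E F where "tensor1 N E" "tensor1 N F" "x = einv N A E" "y = einv N A F"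
      by (auto simp: trange_def)
    then show "x + y \<in> trange N A" unfolding trange_def
      by (intro CollectI exI[of _ "E + F"]) (auto simp: tensor1_def einv_def fun_eq_iff sum.distrib algebra_simps)
  next
    fix c x assume "x \<in> trange N A"
    then obtain E where "tensor1 N E" "x = einv N A E" by (auto simp: trange_def)
    then show "(\<lambda>i. c * x i) \<in> trange N A" unfolding trange_def
      by (intro CollectI exI[of _ "\<lambda>i. c * E i"]) (auto simp: tensor1_def einv_def fun_eq_iff sum_distrib_left algebra_simps)
  qed
qed

lemma tensor1_span:
  assumes "tensor1 N E"
  shows "E \<in> module.span (\<lambda>c (f::tens1). \<lambda>x. c * f x) ((\<lambda>a. \<lambda>x. if x = a then 1 else 0) ` idx N)"
proof -
  interpret V1: vector_space "\<lambda>c (f::tens1). \<lambda>x. c * f x" by (rule V1_vs)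
  let ?e = "\<lambda>a::nat list. \<lambda>x. if x = a then (1::complex) else 0"
  have eq: "E = (\<Sum>a\<in>idx N. (\<lambda>x. E a * ?e a x))"
  proof (intro ext)
    fix x
    have "(\<Sum>a\<in>idx N. (\<lambda>x. E a * ?e a x)) x = (\<Sum>a\<in>idx N. if x = a then E a else 0)"
      by (simp add: sum_fun_app) (rule sum.cong, auto)
    also have "\<dots> = E x" using assms finite_idx[of N] by (auto simp: tensor1_def)
    finally show "E x = (\<Sum>a\<in>idx N. (\<lambda>x. E a * ?e a x)) x" by simp
  qed
  have "(\<lambda>x. E a * ?e a x) \<in> V1.span (?e ` idx N)" if "a \<in> idx N" for a
  proof -
    have "?e a \<in> V1.span (?e ` idx N)" using that by (intro V1.span_base) auto
    then show ?thesis using V1.span_scale by blast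
  qed
  then show ?thesis by (subst eq, intro V1.span_sum) auto
qed

lemma dim_eq_subspace:
  fixes U1 U2 :: "tens1 set" and T :: "tens1 set"
  assumes V: "vector_space (\<lambda>c (f::tens1). \<lambda>x. c * f x)"
  assumes s1: "module.subspace (\<lambda>c (f::tens1). \<lambda>x. c * f x) U1"
    and sub: "U1 \<subseteq> U2" and sp: "U2 \<subseteq> module.span (\<lambda>c (f::tens1). \<lambda>x. c * f x) T" and fT: "finite T"
    and d: "vector_space.dim (\<lambda>c (f::tens1). \<lambda>x. c * f x) U1 = vector_space.dim (\<lambda>c (f::tens1). \<lambda>x. c * f x) U2"
  shows "U1 = U2"
proof (rule ccontr)
  interpret V1: vector_space "\<lambda>c (f::tens1). \<lambda>x. c * f x" by (rule V)
  assume ne: "U1 \<noteq> U2"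
  then obtain v where v: "v \<in> U2" "v \<notin> U1" using sub by auto
  obtain B where B: "B \<subseteq> U1" "V1.independent B" "U1 \<subseteq> V1.span B" "card B = V1.dim U1"
    using V1.basis_exists by blast
  obtain B2 where B2: "B2 \<subseteq> U2" "V1.independent B2" "U2 \<subseteq> V1.span B2" "card B2 = V1.dim U2"
    using V1.basis_exists by blast
  have fB: "finite B" using V1.independent_span_bound[OF fT B(2)] B(1) sub sp by auto
  have fB2: "finite B2" using V1.independent_span_bound[OF fT B2(2)] B2(1) sp by auto
  have "V1.span B \<subseteq> U1" using B(1) s1 by (rule V1.span_minimal)
  then have vn: "v \<notin> V1.span B" using v by auto
  have ind: "V1.independent (insert v B)" by (rule V1.independent_insertI[OF vn B(2)])
  have "insert v B \<subseteq> V1.span B2" using B2 B(1) sub v V1.span_base by blast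
  then have "card (insert v B) \<le> card B2" using V1.independent_span_bound[OF fB2 ind] by auto
  moreover have "card (insert v B) = Suc (card B)" using fB vn V1.span_base by (metis card_insert_disjoint)
  ultimately show False using B(4) B2(4) d by simp
qed

lemma range_eq_W:
  assumes D: "tensor2 N D"
    and c: "cdim (trange N (tpow N D k)) = cdim (trange N (tpow N D (Suc k)))"
  shows "\<exists>W. tensor2 N W \<and> tpow N D k = ein N (tpow N D (Suc k)) W"
proof -
  have sub: "trange N (tpow N D (Suc k)) \<subseteq> trange N (tpow N D k)"
  proof
    fix x assume "x \<in> trange N (tpow N D (Suc k))"
    then obtain E where "tensor1 N E" "x = einv N (tpow N D (Suc k)) E" by (auto simp: trange_def)
    then have "x = einv N (tpow N D k) (einv N D E)" by (simp add: tpow_Suc'[OF D] einv_ein)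
    then show "x \<in> trange N (tpow N D k)" by (auto simp: trange_def)
  qed
  have eq: "trange N (tpow N D (Suc k)) = trange N (tpow N D k)"
    apply (rule dim_eq_subspace[OF V1_vs trange_subspace sub _ _ c[unfolded cdim_def, symmetric]])
    using trange_sub tensor1_span apply blast
    using finite_idx by simp
  let ?e = "\<lambda>a::nat list. \<lambda>x. if x = a then (1::complex) else 0"
  have "\<forall>j\<in>idx N. \<exists>w. tensor1 N w \<and> einv N (tpow N D k) (?e j) = einv N (tpow N D (Suc k)) w"
  proof
    fix j assume j: "j \<in> idx N"
    have "tensor1 N (?e j)" using j by (auto simp: tensor1_def)
    then have "einv N (tpow N D k) (?e j) \<in> trange N (tpow N D (Suc k))" using eq by (auto simp: trange_def)
    then show "\<exists>w. tensor1 N w \<and> einv N (tpow N D k) (?e j) = einv N (tpow N D (Suc k)) w"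
      by (auto simp: trange_def)
  qed
  then obtain w where w: "\<And>j. j \<in> idx N \<Longrightarrow> tensor1 N (w j) \<and> einv N (tpow N D k) (?e j) = einv N (tpow N D (Suc k)) (w j)"
    by metis
  define W where "W = (\<lambda>i j. if j \<in> idx N then w j i else 0)"
  have tW: "tensor2 N W" using w by (auto simp: tensor2_def W_def tensor1_def)
  have "tpow N D k = ein N (tpow N D (Suc k)) W"
  proof (intro ext)
    fix i j
    show "tpow N D k i j = ein N (tpow N D (Suc k)) W i j"
    proof (cases "i \<in> idx N \<and> j \<in> idx N")
      case False then show ?thesis using tensor2_tpow[of N D k] by (auto simp: tensor2_def ein_def)
    next
      case True
      have "ein N (tpow N D (Suc k)) W i j = einv N (tpow N D (Suc k)) (w j) i"
        using True by (simp add: ein_def einv_def W_def)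
      also have "\<dots> = einv N (tpow N D k) (?e j) i" using w True by simp
      also have "\<dots> = tpow N D k i j" using True finite_idx[of N] by (simp add: einv_def sdelta2)
      finally show ?thesis by simp
    qed
  qed
  then show ?thesis using tW by blast
qed



definition isDr :: "nat list \<Rightarrow> tens2 \<Rightarrow> nat \<Rightarrow> tens2 \<Rightarrow> bool" where
  "isDr N D k Y \<longleftrightarrow> tensor2 N Y \<and>
      ein N Y (tpow N D (Suc k)) = tpow N D k \<and> ein N (ein N Y D) Y = Y \<and>
      ein N D Y = ein N Y D"

lemma pow_self_rel:
  assumes X: "tensor2 N X" and D: "tensor2 N D" and x: "ein N (ein N X D) X = X" and c: "ein N D X = ein N X D"
  shows "X = ein N (tpow N X (Suc j)) (tpow N D j)"
proof (induction j)
  case 0 then show ?case using X by (simp add: tpow_Suc ein_tid_right)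
next
  case (Suc j)
  have XXD: "ein N X (ein N X D) = X" using x c by (simp add: ein_assoc)
  have "ein N (tpow N X (Suc (Suc j))) (tpow N D (Suc j))
      = ein N X (ein N (ein N (tpow N X (Suc j)) (tpow N D j)) D)"
    by (simp only: tpow_Suc[of N X "Suc j"] tpow_Suc'[OF D, of j] ein_assoc)
  also have "\<dots> = X" by (simp only: Suc.IH[symmetric] XXD)
  finally show ?case by simp
qed

lemma dr_unique:
  assumes D: "tensor2 N D" and X: "isDr N D k X" and Y: "isDr N D k Y"
  shows "X = Y"
proof -
  have tX: "tensor2 N X" and x1: "ein N X (tpow N D (Suc k)) = tpow N D k"
    and x2: "ein N (ein N X D) X = X" and x3: "ein N D X = ein N X D" using X by (auto simp: isDr_def)
  have tY: "tensor2 N Y" and y1: "ein N Y (tpow N D (Suc k)) = tpow N D k"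
    and y2: "ein N (ein N Y D) Y = Y" and y3: "ein N D Y = ein N Y D" using Y by (auto simp: isDr_def)
  have y1': "ein N (tpow N D (Suc k)) Y = tpow N D k"
    using comm_tpow[OF D tY y3] y1 by simp
  have "X = ein N (tpow N X (Suc k)) (tpow N D k)" by (rule pow_self_rel[OF tX D x2 x3])
  also have "\<dots> = ein N (tpow N X (Suc k)) (ein N (tpow N D k) (ein N D Y))"
    using y1' by (simp add: tpow_Suc'[OF D] ein_assoc)
  also have "\<dots> = ein N X (ein N D Y)"
    by (simp only: ein_assoc[symmetric] pow_self_rel[OF tX D x2 x3, of k, symmetric])
  finally have e1: "X = ein N X (ein N D Y)" .
  have yy: "Y = ein N (tpow N Y (Suc k)) (tpow N D k)" by (rule pow_self_rel[OF tY D y2 y3])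
  also have "\<dots> = ein N (tpow N D k) (tpow N Y (Suc k))"
    using comm_tpow2[OF tY D y3[symmetric]] by simp
  also have "\<dots> = ein N X (ein N (tpow N D (Suc k)) (tpow N Y (Suc k)))"
    by (simp only: ein_assoc[symmetric] x1)
  also have "\<dots> = ein N X (ein N D (ein N (tpow N D k) (tpow N Y (Suc k))))"
    by (simp add: tpow_Suc ein_assoc)
  also have "ein N (tpow N D k) (tpow N Y (Suc k)) = Y"
    using yy comm_tpow2[OF tY D y3[symmetric], of "Suc k" k] by simp
  finally have e2: "Y = ein N X (ein N D Y)" .
  show ?thesis using e1 e2 by simp
qed

lemma pow_W:
  assumes W: "tpow N D k = ein N (tpow N D (Suc k)) W"
  shows "tpow N D k = ein N (tpow N D (k + j)) (tpow N W j)"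
proof (induction j)
  case 0 then show ?case by (simp add: ein_tid_right)
next
  case (Suc j)
  have kk: "k + Suc j = j + Suc k" by simp
  have "ein N (tpow N D (k + Suc j)) (tpow N W (Suc j))
      = ein N (tpow N D j) (ein N (ein N (tpow N D (Suc k)) W) (tpow N W j))"
    by (simp only: kk tpow_add[of N D j "Suc k"] tpow_Suc[of N W j] ein_assoc)
  also have "\<dots> = ein N (tpow N D (j + k)) (tpow N W j)"
    by (simp only: W[symmetric] tpow_add[of N D j k] ein_assoc)
  also have "\<dots> = tpow N D k"
    using Suc.IH by (simp add: add.commute)
  finally show ?case by simp
qed

lemma dr_exists:
  assumes D: "tensor2 N D" and k: "tind N D = k"
  shows "\<exists>G. isDr N D k G"
proof -
  obtain r P where tP: "tensor2 N P" and cP: "ein N D P = ein N P D"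
    and rP: "tpow N D r = ein N (tpow N D (Suc r)) P"
    using pow_rel[OF D] by blast
  have rj: "tpow N D r = ein N (tpow N D (r + j)) (tpow N P j)" for j
    using pow_W[OF rP] .
  define G where "G = ein N (tpow N D r) (tpow N P (Suc r))"
  have tG: "tensor2 N G" by (simp add: G_def)
  have cPD: "ein N (tpow N P a) (tpow N D b) = ein N (tpow N D b) (tpow N P a)" for a b
    using comm_tpow2[OF tP D cP[symmetric]] by simp
  have g1: "ein N G (tpow N D (Suc r)) = tpow N D r"
  proof -
    have "ein N G (tpow N D (Suc r)) = ein N (tpow N D r) (ein N (tpow N D (Suc r)) (tpow N P (Suc r)))"
      by (simp only: G_def ein_assoc cPD)
    also have "\<dots> = ein N (tpow N D (r + Suc r)) (tpow N P (Suc r))"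
      by (simp only: ein_assoc tpow_add)
    also have "\<dots> = tpow N D r" by (rule rj[symmetric])
    finally show ?thesis .
  qed
  have g3: "ein N D G = ein N G D"
  proof -
    have "ein N D G = ein N (tpow N D r) (ein N D (tpow N P (Suc r)))"
      by (simp add: G_def ein_assoc[symmetric] tpow_comm_self[OF D])
    also have "\<dots> = ein N G D"
      using comm_tpow[OF tP D cP[symmetric], of "Suc r"] by (simp add: G_def ein_assoc)
    finally show ?thesis .
  qed
  have g2: "ein N (ein N G D) G = G"
  proof -
    have "ein N (ein N G D) G = ein N (ein N G (ein N D (tpow N D r))) (tpow N P (Suc r))"
      by (simp add: G_def ein_assoc)
    also have "\<dots> = ein N (tpow N D r) (tpow N P (Suc r))"
      using g1 by (simp add: tpow_Suc)
    finally show ?thesis by (simp add: G_def)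
  qed
  have "trange N (tpow N D r) = trange N (tpow N D (Suc r))"
  proof
    show "trange N (tpow N D r) \<subseteq> trange N (tpow N D (Suc r))"
    proof
      fix x assume "x \<in> trange N (tpow N D r)"
      then obtain E where "tensor1 N E" "x = einv N (tpow N D r) E" by (auto simp: trange_def)
      then have "x = einv N (tpow N D (Suc r)) (einv N P E)" using rP by (simp add: einv_ein)
      then show "x \<in> trange N (tpow N D (Suc r))" by (auto simp: trange_def)
    qed
  next
    show "trange N (tpow N D (Suc r)) \<subseteq> trange N (tpow N D r)"
    proof
      fix x assume "x \<in> trange N (tpow N D (Suc r))"
      then obtain E where "tensor1 N E" "x = einv N (tpow N D (Suc r)) E" by (auto simp: trange_def)
      then have "x = einv N (tpow N D r) (einv N D E)" by (simp add: tpow_Suc'[OF D] einv_ein)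
      then show "x \<in> trange N (tpow N D r)" by (auto simp: trange_def)
    qed
  qed
  then have "cdim (trange N (tpow N D r)) = cdim (trange N (tpow N D (Suc r)))" by simp
  then have ck: "cdim (trange N (tpow N D k)) = cdim (trange N (tpow N D (Suc k)))"
    using LeastI[of "\<lambda>k. cdim (trange N (tpow N D k)) = cdim (trange N (tpow N D (Suc k)))" r] k
    by (simp add: tind_def)
  obtain W where tW: "tensor2 N W" and W: "tpow N D k = ein N (tpow N D (Suc k)) W"
    using range_eq_W[OF D ck] by blast
  have kW: "tpow N D k = ein N (tpow N D (k + Suc r)) (tpow N W (Suc r))"
    using pow_W[OF W] .
  have n1: "Suc (k + Suc r) = Suc r + Suc k" by simp
  have n2: "r + Suc k = k + Suc r" by simp
  have e1: "tpow N D (Suc k) = ein N (ein N (tpow N D (Suc r)) (tpow N D (Suc k))) (tpow N W (Suc r))"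
  proof -
    have "tpow N D (Suc k) = ein N D (tpow N D k)" by (rule tpow_Suc)
    also have "\<dots> = ein N D (ein N (tpow N D (k + Suc r)) (tpow N W (Suc r)))"
      by (subst kW) (rule refl)
    also have "\<dots> = ein N (tpow N D (Suc (k + Suc r))) (tpow N W (Suc r))"
      by (simp only: tpow_Suc[of N D "k + Suc r"] ein_assoc)
    also have "\<dots> = ein N (tpow N D (Suc r + Suc k)) (tpow N W (Suc r))"
      by (simp only: n1)
    finally show ?thesis by (simp only: tpow_add[of N D "Suc r" "Suc k"])
  qed
  have "ein N G (tpow N D (Suc k)) = ein N (ein N (ein N G (tpow N D (Suc r))) (tpow N D (Suc k))) (tpow N W (Suc r))"
    by (subst e1) (simp only: ein_assoc)
  also have "\<dots> = ein N (tpow N D (r + Suc k)) (tpow N W (Suc r))"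
    by (simp only: g1 tpow_add[of N D r "Suc k"])
  also have "\<dots> = ein N (tpow N D (k + Suc r)) (tpow N W (Suc r))"
    by (simp only: n2)
  also have "\<dots> = tpow N D k" by (rule kW[symmetric])
  finally have "ein N G (tpow N D (Suc k)) = tpow N D k" .
  then show ?thesis using tG g2 g3 by (auto simp: isDr_def)
qed

lemma drazin_props:
  assumes D: "tensor2 N D"
  shows "isDr N D (tind N D) (drazin N D)"
proof -
  have "\<exists>!Y. isDr N D (tind N D) Y" using dr_exists[OF D refl] dr_unique[OF D] by blast
  then show ?thesis unfolding drazin_def Let_def isDr_def[symmetric] by (rule theI')
qed



lemma tensor1_tadd1: "tensor1 N E \<Longrightarrow> tensor1 N F \<Longrightarrow> tensor1 N (tadd1 E F)"
  by (auto simp: tensor1_def tadd1_def)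
lemma einv_zero_left: "einv N 0 E = 0" by (auto simp: fun_eq_iff einv_def)

theorem mainTheorem13:
  fixes N :: "nat list" and D :: tens2 and B :: tens1 and k :: nat
  assumes "\<forall>n\<in>set N. 0 < n"
    and "tensor2 N D" and "tensor1 N B"
    and "tind N D = k"
  shows "{Z. tensor1 N Z \<and>
            einv N (tpow N D k) Z = einv N (tpow N D k) (einv N (mpinv N D) B)}
       = {tadd1 (einv N (cmp N D) B)
                (einv N (tminus (tid N) (ein N (cmp N D) D)) Q) | Q. tensor1 N Q}"
proof -
  have tD: "tensor2 N D" using assms by simp
  define M where "M = mpinv N D"
  define G where "G = drazin N D"
  define C where "C = cmp N D"
  define Dk where "Dk = tpow N D k"
  have MP: "isMP N D M" unfolding M_def by (rule mpinv_props[OF tD])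
  have tM: "tensor2 N M" and DMD: "ein N D (ein N M D) = D"
    using MP by (auto simp: isMP_def ein_assoc)
  have DR: "isDr N D k G" unfolding G_def using drazin_props[OF tD] assms(4) by simp
  have tG: "tensor2 N G" and g1: "ein N G (tpow N D (Suc k)) = Dk"
    and g2: "ein N (ein N G D) G = G" and g3: "ein N D G = ein N G D"
    using DR by (auto simp: isDr_def Dk_def)
  have C_def': "C = ein N M (ein N D (ein N G (ein N D M)))"
    by (simp add: C_def cmp_def M_def G_def ein_assoc)
  have tDk: "tensor2 N Dk" by (simp add: Dk_def)
  have F1: "ein N Dk (ein N M D) = Dk"
  proof (cases k)
    case 0
    have GD: "ein N G D = tid N" using g1 0 by (simp add: Dk_def tpow_Suc ein_tid_right[OF tD])
    have "ein N M D = ein N (ein N G D) (ein N M D)" using tM tD by (simp add: GD ein_tid_left)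
    also have "\<dots> = ein N G D" using DMD by (simp add: ein_assoc)
    finally have "ein N M D = tid N" using GD by simp
    then show ?thesis using 0 by (simp add: Dk_def ein_tid_left)
  next
    case (Suc k')
    then have "Dk = ein N (tpow N D k') D" by (simp add: Dk_def tpow_Suc'[OF tD])
    then show ?thesis using DMD by (simp add: ein_assoc)
  qed
  have cGDk: "ein N G Dk = ein N Dk G"
    unfolding Dk_def using comm_tpow[OF tD tG g3] by simp
  have DkD: "ein N Dk D = tpow N D (Suc k)" by (simp add: Dk_def tpow_Suc'[OF tD])
  have F3: "ein N Dk C = ein N Dk M"
  proof -
    have "ein N Dk C = ein N (ein N Dk (ein N M D)) (ein N G (ein N D M))"
      by (simp add: C_def' ein_assoc)
    also have "\<dots> = ein N (ein N G (ein N Dk D)) M" using F1 cGDk by (simp add: ein_assoc[symmetric])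
    also have "\<dots> = ein N Dk M" using DkD g1 by simp
    finally show ?thesis .
  qed
  have F4: "ein N Dk (ein N C D) = Dk"
    using F3 F1 by (simp add: ein_assoc[symmetric])
  have F5: "G = ein N (tpow N G (Suc k)) Dk"
    unfolding Dk_def by (rule pow_self_rel[OF tG tD g2 g3])
  have cDDk: "ein N D Dk = ein N Dk D" unfolding Dk_def by (rule tpow_comm_self[OF tD])
  have F6: "ein N G D = ein N (ein N (tpow N G (Suc k)) D) Dk"
  proof -
    have "ein N G D = ein N (tpow N G (Suc k)) (ein N Dk D)" by (subst F5) (simp add: ein_assoc)
    then show ?thesis using cDDk by (simp add: ein_assoc)
  qed
  have CD: "ein N C D = ein N M (ein N D (ein N G D))"
  proof -
    have "ein N C D = ein N M (ein N D (ein N G (ein N D (ein N M D))))" by (simp add: C_def' ein_assoc)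
    then show ?thesis using DMD by simp
  qed
  show ?thesis
    unfolding M_def[symmetric] C_def[symmetric] Dk_def[symmetric]
  proof (intro set_eqI iffI)
    fix Z assume "Z \<in> {Z. tensor1 N Z \<and> einv N Dk Z = einv N Dk (einv N M B)}"
    then have tZ: "tensor1 N Z" and hZ: "einv N Dk Z = einv N Dk (einv N M B)" by auto
    have "einv N C B = einv N (ein N M D) (einv N (ein N G D) (einv N M B))"
      by (simp add: C_def' einv_ein)
    also have "einv N (ein N G D) (einv N M B) = einv N (ein N G D) Z"
      by (simp only: F6 einv_ein hZ)
    finally have eC: "einv N C B = einv N (ein N C D) Z"
      by (simp add: CD einv_ein)
    have "Z = tadd1 (einv N C B) (einv N (tminus (tid N) (ein N C D)) Z)"
      by (simp add: fun_eq_iff tadd1_def einv_tminus einv_tid[OF tZ] eC)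
    then show "Z \<in> {tadd1 (einv N C B) (einv N (tminus (tid N) (ein N C D)) Q) | Q. tensor1 N Q}"
      using tZ by blast
  next
    fix Z assume "Z \<in> {tadd1 (einv N C B) (einv N (tminus (tid N) (ein N C D)) Q) | Q. tensor1 N Q}"
    then obtain Q where tQ: "tensor1 N Q" and Z: "Z = tadd1 (einv N C B) (einv N (tminus (tid N) (ein N C D)) Q)"
      by auto
    have tZ: "tensor1 N Z" by (simp add: Z tensor1_tadd1)
    have z0: "ein N Dk (tminus (tid N) (ein N C D)) = 0"
      by (simp only: ein_tminus_right ein_tid_right[OF tDk] F4 tminus_self)
    have "einv N Dk Z = tadd1 (einv N (ein N Dk C) B) (einv N (ein N Dk (tminus (tid N) (ein N C D))) Q)"
      by (simp add: Z einv_tadd1 einv_ein)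
    also have "\<dots> = einv N Dk (einv N M B)"
      by (simp add: z0 F3 einv_zero_left einv_ein tadd1_def)
    finally show "Z \<in> {Z. tensor1 N Z \<and> einv N Dk Z = einv N Dk (einv N M B)}"
      using tZ by simp
  qed
qed


end
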